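(* There is an absolute constant $C_2$ such that for all $p\in(0,0.1)$, with $q=-\log(1-p)$ and $B=\lfloor q^{-1}\log q^{-1}\rfloor$, we have $B\,g(Bq/2)\le C_2\log q^{-1}$.
   Context: $\beta(u)=\frac{u+\sqrt{u(4-3u)}}{2}$ and $g(z)=-\log\beta(1-e^{-z})$ for $z>0$. *)

theory Defs
  imports "HOL-Analysis.Analysis"
begin

definition beta_fn :: "real \<Rightarrow> real" where
  "beta_fn u = (u + sqrt (u * (4 - 3 * u))) / 2"

definition g_fn :: "real \<Rightarrow> real" where
  "g_fn z = - ln (beta_fn (1 - exp (- z)))"

end

theory Submission
  imports Defs
begin

lemma beta_lower:
  fixes e :: real assumes "0 \<le> e" "e \<le> 1"
  shows "1 - e^2 \<le> beta_fn (1 - e)"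
proof -
  have "1 + e - 2*e^2 \<le> sqrt ((1 - e) * (4 - 3 * (1 - e)))"
  proof (cases "1 + e - 2*e^2 \<le> 0")
    case True
    have "0 \<le> (1 - e) * (4 - 3 * (1 - e))" using assms by simp
    hence "0 \<le> sqrt ((1 - e) * (4 - 3 * (1 - e)))" by (rule real_sqrt_ge_zero)
    then show ?thesis using True by linarith
  next
    case False
    have "(1 + e - 2*e^2)^2 \<le> (1 - e) * (4 - 3 * (1 - e))"
    proof -
      have "e^4 \<le> e^3" using power_decreasing[of 3 4 e] assms by simp
      have "(1 + e - 2*e^2)^2 = (1 - e) * (4 - 3 * (1 - e)) - 4*e^3 + 4*e^4"
        by (simp add: power2_eq_square power3_eq_cube power4_eq_xxxx algebra_simps)
      thus ?thesis using \<open>e^4 \<le> e^3\<close> by linarith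
    qed
    thus ?thesis using False by (simp add: real_le_rsqrt)
  qed
  thus ?thesis unfolding beta_fn_def by (simp add: power2_eq_square)
qed

lemma g_bound:
  fixes z :: real assumes "0 \<le> z" "exp (-2*z) \<le> 1/2"
  shows "g_fn z \<le> 2 * exp (-2*z)"
proof -
  define e where "e = exp (-z)"
  have e0: "0 \<le> e" "e \<le> 1" using assms by (auto simp: e_def)
  have e2: "e^2 = exp (-2*z)" unfolding e_def by (simp add: power2_eq_square exp_add[symmetric])
  have pos: "0 < 1 - e^2" using e2 assms(2) by linarith
  have "ln (1 - e^2) \<le> ln (beta_fn (1 - e))"
    using beta_lower[OF e0] pos by simp
  moreover have "- (e^2) - 2*(e^2)^2 \<le> ln (1 - e^2)"
    using ln_one_minus_pos_lower_bound[of "e^2"] e2 assms(2) by auto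
  moreover have "(e^2)^2 \<le> e^2 * (1/2)" unfolding power2_eq_square[of "e^2"]
    using e2 assms(2) by (intro mult_left_mono) auto
  ultimately show ?thesis unfolding g_fn_def e_def[symmetric] e2[symmetric] by linarith
qed

theorem lemma10:
  shows "\<exists>C2::real. \<forall>p::real. 0 < p \<and> p < 0.1 \<longrightarrow>
     (let q = - ln (1 - p);
          B = real_of_int \<lfloor>(1 / q) * ln (1 / q)\<rfloor>
      in B * g_fn (B * q / 2) \<le> C2 * ln (1 / q))"
proof (intro exI allI impI)
  fix p :: real assume p: "0 < p \<and> p < 0.1"
  define q where "q = - ln (1 - p)"
  define L where "L = ln (1/q)"
  define B where "B = real_of_int \<lfloor>(1 / q) * L\<rfloor>"
  have q0: "0 < q" using p by (simp add: q_def)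
  have "ln (1 - p) \<ge> - p / (1 - p)"
  proof -
    have "ln (1/(1-p)) \<le> 1/(1-p) - 1" using p by (intro ln_le_minus_one) auto
    thus ?thesis using p by (simp add: ln_div field_simps)
  qed
  hence "q \<le> p / (1 - p)" unfolding q_def by simp
  also have "\<dots> \<le> 1/9" using p by (simp add: field_simps)
  finally have q1: "q \<le> 1/9" .
  have L0: "0 \<le> L" unfolding L_def using q0 q1 by simp
  have B0: "0 \<le> B" unfolding B_def using q0 L0 by simp
  have Bup: "B \<le> L / q" unfolding B_def by simp
  have Blow: "B \<ge> L / q - 1" unfolding B_def using floor_correct[of "1/q*L"] by simp
  hence "B * q \<ge> L - q" using q0 by (simp add: field_simps)
  hence "exp (- (B*q)) \<le> exp (q - L)" by simp
  also have "\<dots> = exp q * q" using q0 by (simp add: L_def exp_diff)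
  also have "\<dots> \<le> 3 * q"
  proof -
    have "exp q \<le> exp 1" using q1 by simp
    also have "\<dots> \<le> 3" using exp_le by simp
    finally show ?thesis using q0 by simp
  qed
  finally have E: "exp (- (B*q)) \<le> 3 * q" .
  have z: "-2 * (B*q/2) = - (B*q)" by simp
  have G: "g_fn (B*q/2) \<le> 6 * q"
    using g_bound[of "B*q/2"] E q1 q0 B0 unfolding z by simp
  have "B * g_fn (B*q/2) \<le> B * (6*q)" using G B0 by (rule mult_left_mono)
  also have "\<dots> \<le> (L/q) * (6*q)" using Bup q0 by (intro mult_right_mono) auto
  also have "\<dots> = 6 * L" using q0 by simp
  finally show "let q = - ln (1 - p);
          B = real_of_int \<lfloor>(1 / q) * ln (1 / q)\<rfloor>
      in B * g_fn (B * q / 2) \<le> 6 * ln (1 / q)"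
    unfolding Let_def q_def[symmetric] L_def[symmetric] B_def[symmetric] .
qed

end
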